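(* Let $p\in[1,\infty)$ and let $\zeta:\mathbb{R}\to[0,\infty)$ be continuous and decreasing such that $\int_0^\infty\zeta(t)^pt^{n-1}dt<\infty$. If $u_k,u\in\mathrm{Conv}_{\mathrm{coe}}(\mathbb{R}^n)$ are such that $u_k$ epi-converges to $u$, then $\delta_{\zeta,p}(u_k,u)\to 0$ as $k\to\infty$.
   Context: $\mathrm{Conv}_{\mathrm{coe}}(\mathbb{R}^n)$ is the set of proper, lower semicontinuous, convex, coercive functions $u:\mathbb{R}^n\to\mathbb{R}\cup\{+\infty\}$. $\delta_{\zeta,p}(u,v)=\left(\int_{\mathbb{R}^n}|\zeta(u(x))-\zeta(v(x))|^p dx\right)^{1/p}$, with convention $\zeta(+\infty):=\lim_{t\to\infty}\zeta(t)=0$. Epi-convergence $u_k\to u$: for every $x$, $\liminf_k u_k(x_k)\ge u(x)$ for all $x_k\to x$ and $\limsup_k u_k(x_k)\le u(x)$ for some $x_k\to x$. *)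

theory Defs
  imports "HOL-Analysis.Analysis" "HOL-Library.Extended_Real"
begin

text \<open>Functions on R^n with values in R \<union> {+\<infinity>} are modelled as 'a \<Rightarrow> ereal,
  where 'a is a Euclidean space (R^n with n = DIM('a)).\<close>

definition proper_fun :: "('a \<Rightarrow> ereal) \<Rightarrow> bool" where
  "proper_fun u \<longleftrightarrow> (\<forall>x. u x \<noteq> -\<infinity>) \<and> (\<exists>x. u x \<noteq> \<infinity>)"

definition lsc_fun :: "('a::metric_space \<Rightarrow> ereal) \<Rightarrow> bool" where
  "lsc_fun u \<longleftrightarrow> (\<forall>x xs. xs \<longlonglongrightarrow> x \<longrightarrow> u x \<le> liminf (\<lambda>k. u (xs k)))"

definition convex_fun :: "('a::real_vector \<Rightarrow> ereal) \<Rightarrow> bool" where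
  "convex_fun u \<longleftrightarrow> (\<forall>x y t. 0 < t \<and> t < 1 \<longrightarrow>
      u ((1 - t) *\<^sub>R x + t *\<^sub>R y) \<le> ereal (1 - t) * u x + ereal t * u y)"

definition coercive_fun :: "('a::real_normed_vector \<Rightarrow> ereal) \<Rightarrow> bool" where
  "coercive_fun u \<longleftrightarrow> (u \<longlongrightarrow> \<infinity>) at_infinity"

definition Conv_coe :: "('a::euclidean_space \<Rightarrow> ereal) set" where
  "Conv_coe = {u. proper_fun u \<and> lsc_fun u \<and> convex_fun u \<and> coercive_fun u}"

definition epi_converges :: "(nat \<Rightarrow> 'a::metric_space \<Rightarrow> ereal) \<Rightarrow> ('a \<Rightarrow> ereal) \<Rightarrow> bool" where
  "epi_converges us u \<longleftrightarrow> (\<forall>x.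
      (\<forall>xs. xs \<longlonglongrightarrow> x \<longrightarrow> u x \<le> liminf (\<lambda>k. us k (xs k))) \<and>
      (\<exists>xs. xs \<longlonglongrightarrow> x \<and> limsup (\<lambda>k. us k (xs k)) \<le> u x))"

text \<open>Extension of \<zeta> to R \<union> {+\<infinity>} with \<zeta>(+\<infinity>) = 0 (the value at -\<infinity> is irrelevant
  since proper functions never take it).\<close>
definition zeta_ext :: "(real \<Rightarrow> real) \<Rightarrow> ereal \<Rightarrow> real" where
  "zeta_ext \<zeta> s = (case s of ereal r \<Rightarrow> \<zeta> r | _ \<Rightarrow> 0)"

definition delta_zeta_p :: "(real \<Rightarrow> real) \<Rightarrow> real \<Rightarrow> ('a::euclidean_space \<Rightarrow> ereal) \<Rightarrow> ('a \<Rightarrow> ereal) \<Rightarrow> ennreal" where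
  "delta_zeta_p \<zeta> p u v =
     (let I = (\<integral>\<^sup>+ x. ennreal (\<bar>zeta_ext \<zeta> (u x) - zeta_ext \<zeta> (v x)\<bar> powr p) \<partial>lborel)
      in if I = \<infinity> then \<infinity> else ennreal (enn2real I powr (1 / p)))"

end

theory Submission
  imports Defs
begin


lemma zeta_ext_alt: "zeta_ext z s = (if s = \<infinity> \<or> s = -\<infinity> then 0 else z (real_of_ereal s))"
  by (cases s) (auto simp: zeta_ext_def)

lemma lsc_measurable:
  fixes u :: "'a::euclidean_space \<Rightarrow> ereal"
  assumes "lsc_fun u" shows "u \<in> borel_measurable borel"
proof (rule borel_measurableI_le)
  fix y
  have "closed {x. u x \<le> y}"
    unfolding closed_sequential_limits
  proof (intro allI impI)
    fix xs l assume h: "(\<forall>n. xs n \<in> {x. u x \<le> y}) \<and> xs \<longlonglongrightarrow> l"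
    then have "u l \<le> liminf (\<lambda>k. u (xs k))" using assms unfolding lsc_fun_def by blast
    also have "\<dots> \<le> y" using h by (intro Liminf_le) auto
    finally show "l \<in> {x. u x \<le> y}" by simp
  qed
  then show "{x \<in> space borel. u x \<le> y} \<in> sets borel" by simp
qed

lemma zeta_ext_measurable[measurable]:
  assumes "continuous_on UNIV z" "f \<in> borel_measurable M"
  shows "(\<lambda>x. zeta_ext z (f x)) \<in> borel_measurable M"
proof -
  have [measurable]: "z \<in> borel_measurable borel" using assms(1) by (rule borel_measurable_continuous_onI)
  note assms(2)[measurable]
  show ?thesis unfolding zeta_ext_alt by measurable
qed

lemma convex_sublevel:
  assumes "convex_fun f" shows "convex {z. f z \<le> ereal M}"
  unfolding convex_alt
proof (intro ballI allI impI)
  fix x y and t :: real assume x: "x \<in> {z. f z \<le> ereal M}" and y: "y \<in> {z. f z \<le> ereal M}" and t: "0 \<le> t \<and> t \<le> 1"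
  show "(1 - t) *\<^sub>R x + t *\<^sub>R y \<in> {z. f z \<le> ereal M}"
  proof (cases "t = 0 \<or> t = 1")
    case True then show ?thesis using x y by auto
  next
    case False
    then have "0 < t" "t < 1" using t by auto
    then have "f ((1 - t) *\<^sub>R x + t *\<^sub>R y) \<le> ereal (1 - t) * f x + ereal t * f y"
      using assms unfolding convex_fun_def by blast
    also have "\<dots> \<le> ereal (1 - t) * ereal M + ereal t * ereal M"
      using x y \<open>0 < t\<close> \<open>t < 1\<close> by (intro add_mono ereal_mult_left_mono) auto
    also have "\<dots> = ereal M" by (simp add: algebra_simps)
    finally show ?thesis by simp
  qed
qed

lemma convex_dom:
  assumes "convex_fun f" shows "convex {z. f z < \<infinity>}"
  unfolding convex_alt
proof (intro ballI allI impI)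
  fix x y and t :: real assume x: "x \<in> {z. f z < \<infinity>}" and y: "y \<in> {z. f z < \<infinity>}" and t: "0 \<le> t \<and> t \<le> 1"
  show "(1 - t) *\<^sub>R x + t *\<^sub>R y \<in> {z. f z < \<infinity>}"
  proof (cases "t = 0 \<or> t = 1")
    case True then show ?thesis using x y by auto
  next
    case False
    then have "0 < t" "t < 1" using t by auto
    then have "f ((1 - t) *\<^sub>R x + t *\<^sub>R y) \<le> ereal (1 - t) * f x + ereal t * f y"
      using assms unfolding convex_fun_def by blast
    also have "\<dots> < \<infinity>"
      using x y \<open>0 < t\<close> \<open>t < 1\<close> by (cases "f x"; cases "f y") auto
    finally show ?thesis by simp
  qed
qed



lemma epi_subseq:
  fixes us :: "nat \<Rightarrow> 'a::metric_space \<Rightarrow> ereal"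
  assumes epi: "epi_converges us u" and q: "strict_mono q" and ys: "ys \<longlonglongrightarrow> y"
  shows "u y \<le> liminf (\<lambda>m. us (q m) (ys m))"
proof -
  define z where "z j = (if j \<in> range q then ys (inv q j) else y)" for j
  have inj: "inj q" using q by (rule strict_mono_imp_inj_on)
  have zq: "z (q m) = ys m" for m using inj by (simp add: z_def)
  have "z \<longlonglongrightarrow> y"
    unfolding lim_sequentially
  proof (intro allI impI)
    fix r :: real assume "0 < r"
    then obtain N where N: "\<And>m. m \<ge> N \<Longrightarrow> dist (ys m) y < r"
      using ys unfolding lim_sequentially by blast
    show "\<exists>no. \<forall>n\<ge>no. dist (z n) y < r"
    proof (intro exI allI impI)
      fix n assume n: "q N \<le> n"
      show "dist (z n) y < r"
      proof (cases "n \<in> range q")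
        case True
        then obtain m where m: "n = q m" by auto
        then have "N \<le> m" using n q by (simp add: strict_mono_less_eq)
        then show ?thesis using N m zq by simp
      next
        case False then show ?thesis using \<open>0 < r\<close> by (simp add: z_def)
      qed
    qed
  qed
  then have "u y \<le> liminf (\<lambda>j. us j (z j))" using epi unfolding epi_converges_def by blast
  also have "\<dots> \<le> liminf ((\<lambda>j. us j (z j)) \<circ> q)" by (rule liminf_subseq_mono[OF q])
  also have "((\<lambda>j. us j (z j)) \<circ> q) = (\<lambda>m. us (q m) (ys m))" by (auto simp: zq)
  finally show ?thesis .
qed

lemma epi_compact:
  fixes us :: "nat \<Rightarrow> 'a::metric_space \<Rightarrow> ereal"
  assumes epi: "epi_converges us u" and C: "compact C" and r: "strict_mono r" and ys: "\<And>m. ys m \<in> C"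
  shows "\<exists>y\<in>C. u y \<le> limsup (\<lambda>m. us (r m) (ys m))"
proof -
  obtain l s where l: "l \<in> C" and s: "strict_mono s" and lim: "(ys \<circ> s) \<longlonglongrightarrow> l"
    using seq_compactE[OF compact_imp_seq_compact[OF C]] ys by metis
  have "u l \<le> liminf (\<lambda>m. us ((r \<circ> s) m) ((ys \<circ> s) m))"
    by (rule epi_subseq[OF epi strict_mono_o[OF r s] lim])
  also have "\<dots> = liminf ((\<lambda>m. us (r m) (ys m)) \<circ> s)" by (simp add: o_def)
  also have "\<dots> \<le> limsup ((\<lambda>m. us (r m) (ys m)) \<circ> s)" by (rule Liminf_le_Limsup) simp
  also have "\<dots> \<le> limsup (\<lambda>m. us (r m) (ys m))" by (rule limsup_subseq_mono[OF s])
  finally show ?thesis using l by blast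
qed



lemma freq_subseq:
  fixes P :: "nat \<Rightarrow> nat \<Rightarrow> bool"
  assumes "\<And>m N. \<exists>k\<ge>N. P m k"
  shows "\<exists>r. strict_mono r \<and> (\<forall>m. P m (r m))"
proof -
  have "\<exists>f. \<forall>n. P n (f n) \<and> f n < f (Suc n)"
  proof (rule dependent_nat_choice)
    show "\<exists>x. P 0 x" using assms by blast
    fix x n assume "P n x"
    show "\<exists>y. P (Suc n) y \<and> x < y" using assms[where m="Suc n" and N="Suc x"] by (auto simp: Suc_le_eq)
  qed
  then obtain f where "\<forall>n. P n (f n) \<and> f n < f (Suc n)" by blast
  then show ?thesis by (intro exI[of _ f]) (auto simp: strict_mono_Suc_iff)
qed

lemma conv_coeD:
  assumes "u \<in> Conv_coe"
  shows "\<And>x. u x \<noteq> -\<infinity>" "\<exists>x. u x \<noteq> \<infinity>" "lsc_fun u" "convex_fun u" "coercive_fun u"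
  using assms unfolding Conv_coe_def proper_fun_def by auto

lemma unif_coercive:
  fixes us :: "nat \<Rightarrow> 'a::euclidean_space \<Rightarrow> ereal"
  assumes epi: "epi_converges us u" and uk: "\<And>k. us k \<in> Conv_coe" and u: "u \<in> Conv_coe"
  shows "\<exists>\<alpha> \<beta> K. \<beta> > 0 \<and> (\<forall>k\<ge>K. \<forall>y. ereal (\<alpha> + \<beta> * norm y) \<le> us k y)"
proof -
  obtain x0 where x0: "u x0 \<noteq> \<infinity>" using conv_coeD(2)[OF u] by blast
  obtain a where a: "u x0 = ereal a" using x0 conv_coeD(1)[OF u, of x0] by (cases "u x0") auto
  define c where "c = a + 1"
  obtain xs where xs: "xs \<longlonglongrightarrow> x0" and xsl: "limsup (\<lambda>k. us k (xs k)) \<le> u x0"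
    using epi unfolding epi_converges_def by blast
  have ev1: "eventually (\<lambda>k. us k (xs k) < ereal c) sequentially"
  proof (rule Limsup_lessD)
    have "limsup (\<lambda>k. us k (xs k)) \<le> ereal a" using xsl a by simp
    then show "limsup (\<lambda>k. us k (xs k)) < ereal c" by (rule le_less_trans) (simp add: c_def)
  qed
  have "eventually (\<lambda>y. ereal (c + 3) < u y) at_infinity"
    using conv_coeD(5)[OF u] unfolding coercive_fun_def tendsto_PInfty by blast
  then obtain b where b: "\<And>y. b \<le> norm y \<Longrightarrow> ereal (c + 3) < u y"
    unfolding eventually_at_infinity by blast
  define R where "R = max b (norm x0 + 1)"
  have R0: "R > 0" unfolding R_def by (smt (verit) norm_ge_zero)
  have bR: "\<And>y. R \<le> norm y \<Longrightarrow> ereal (c + 3) < u y" using b unfolding R_def by force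
  have ev2: "eventually (\<lambda>k. norm (xs k) < R) sequentially"
  proof -
    have "eventually (\<lambda>k. dist (xs k) x0 < 1) sequentially" using xs by (rule tendstoD) simp
    then show ?thesis
    proof (rule eventually_mono)
      fix k assume "dist (xs k) x0 < 1"
      then show "norm (xs k) < R" unfolding R_def dist_norm using norm_triangle_sub[of "xs k" x0]
        by (smt (verit) norm_minus_commute)
    qed
  qed
  have ev3: "eventually (\<lambda>k. \<forall>y. norm y = R \<longrightarrow> ereal (c + 2) < us k y) sequentially"
  proof (rule ccontr)
    assume "\<not> ?thesis"
    then have fr: "\<And>N. \<exists>k\<ge>N. \<exists>y. norm y = R \<and> us k y \<le> ereal (c + 2)"
      unfolding eventually_sequentially by (auto simp: not_less)
    obtain r :: "nat \<Rightarrow> nat" where r: "strict_mono r" and P: "\<And>m. \<exists>y. norm y = R \<and> us (r m) y \<le> ereal (c + 2)"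
      using freq_subseq[of "\<lambda>m k. \<exists>y::'a. norm y = R \<and> us k y \<le> ereal (c + 2)", OF fr] by blast
    then obtain ys where ys: "\<And>m. norm (ys m) = R \<and> us (r m) (ys m) \<le> ereal (c + 2)" by metis
    obtain y where y: "y \<in> sphere 0 R" and uy: "u y \<le> limsup (\<lambda>m. us (r m) (ys m))"
      using epi_compact[OF epi compact_sphere r, of ys 0 R] ys by auto
    have "limsup (\<lambda>m. us (r m) (ys m)) \<le> ereal (c + 2)" using ys by (intro Limsup_bounded) auto
    with uy have "u y \<le> ereal (c + 2)" by simp
    moreover have "ereal (c + 3) < u y" using y by (intro bR) auto
    ultimately show False by (cases "u y") auto
  qed
  have "\<exists>M. eventually (\<lambda>k. \<forall>y. norm y \<le> R \<longrightarrow> ereal (- M) < us k y) sequentially"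
  proof (rule ccontr)
    assume "\<not> ?thesis"
    then have fr: "\<And>m N. \<exists>k\<ge>N. \<exists>y. norm y \<le> R \<and> us k y \<le> ereal (- real m)"
      unfolding eventually_sequentially by (auto simp: not_less)
    obtain r :: "nat \<Rightarrow> nat" where r: "strict_mono r" and P: "\<And>m. \<exists>y. norm y \<le> R \<and> us (r m) y \<le> ereal (- real m)"
      using freq_subseq[of "\<lambda>m k. \<exists>y::'a. norm y \<le> R \<and> us k y \<le> ereal (- real m)", OF fr] by blast
    then obtain ys where ys: "\<And>m. norm (ys m) \<le> R \<and> us (r m) (ys m) \<le> ereal (- real m)" by metis
    obtain y where y: "y \<in> cball 0 R" and uy: "u y \<le> limsup (\<lambda>m. us (r m) (ys m))"
      using epi_compact[OF epi compact_cball r, of ys 0 R] ys by auto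
    have le: "u y \<le> ereal (- real m0)" for m0
    proof -
      have "limsup (\<lambda>m. us (r m) (ys m)) \<le> ereal (- real m0)"
      proof (rule Limsup_bounded)
        show "\<forall>\<^sub>F m in sequentially. us (r m) (ys m) \<le> ereal (- real m0)"
          unfolding eventually_sequentially
        proof (intro exI allI impI)
          fix m assume "m0 \<le> m"
          then show "us (r m) (ys m) \<le> ereal (- real m0)" using ys[of m] by (meson order.trans ereal_less_eq(3) neg_le_iff_le of_nat_le_iff)
        qed
      qed
      then show ?thesis using uy by simp
    qed
    show False
    proof (cases "u y")
      case (real v)
      then have "v \<le> - real (nat (ceiling (- v)) + 1)" using le[of "nat (ceiling (- v)) + 1"] by simp
      moreover have "- v \<le> real (nat (ceiling (- v)))" by linarith
      ultimately show False by linarith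
    next
      case PInf then show False using le[of 0] by simp
    next
      case MInf then show False using conv_coeD(1)[OF u] by blast
    qed
  qed
  then obtain M where ev4: "eventually (\<lambda>k. \<forall>y. norm y \<le> R \<longrightarrow> ereal (- M) < us k y) sequentially" by blast
  obtain K where K: "\<And>k. k \<ge> K \<Longrightarrow> us k (xs k) < ereal c \<and> norm (xs k) < R \<and>
      (\<forall>y. norm y = R \<longrightarrow> ereal (c + 2) < us k y) \<and> (\<forall>y. norm y \<le> R \<longrightarrow> ereal (- M) < us k y)"
    using eventually_conj[OF ev1 eventually_conj[OF ev2 eventually_conj[OF ev3 ev4]]]
    unfolding eventually_sequentially by blast
  define \<alpha> where "\<alpha> = min (c - 1) (- M - 1)"
  define \<beta> where "\<beta> = 1 / R"
  have "\<forall>k\<ge>K. \<forall>y. ereal (\<alpha> + \<beta> * norm y) \<le> us k y"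
  proof (intro allI impI)
    fix k y assume k: "K \<le> k"
    note Kk = K[OF k]
    show "ereal (\<alpha> + \<beta> * norm y) \<le> us k y"
    proof (cases "norm y \<le> R")
      case True
      have "\<beta> * norm y \<le> 1" using True R0 unfolding \<beta>_def by (simp add: field_simps)
      then have "\<alpha> + \<beta> * norm y \<le> - M" unfolding \<alpha>_def by linarith
      then show ?thesis using Kk True by (meson ereal_less_eq(3) less_imp_le order.trans)
    next
      case False
      define x1 where "x1 = xs k"
      have nx1: "norm x1 < R" and ux1: "us k x1 < ereal c" using Kk x1_def by auto
      define g where "g t = norm (x1 + t *\<^sub>R (y - x1))" for t
      have "continuous_on {0..1} g" unfolding g_def by (intro continuous_intros)
      moreover have "g 0 \<le> R" "R \<le> g 1" using nx1 False by (auto simp: g_def)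
      ultimately obtain t where t: "0 \<le> t" "t \<le> 1" "g t = R" using IVT'[of g 0 R 1] by auto
      have t0: "t \<noteq> 0" using t nx1 by (auto simp: g_def)
      have t1: "t \<noteq> 1" using t False by (auto simp: g_def)
      define w where "w = (1 - t) *\<^sub>R x1 + t *\<^sub>R y"
      have w: "w = x1 + t *\<^sub>R (y - x1)" unfolding w_def by (simp add: algebra_simps)
      have nw: "norm w = R" using t w by (simp add: g_def)
      have uw: "ereal (c + 2) < us k w" using Kk nw by blast
      have "us k w \<le> ereal (1 - t) * us k x1 + ereal t * us k y"
        using conv_coeD(4)[OF uk[of k]] t t0 t1 unfolding convex_fun_def w_def by auto
      show ?thesis
      proof (cases "us k y")
        case PInf then show ?thesis by simp
      next
        case MInf then show ?thesis using conv_coeD(1)[OF uk[of k]] by blast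
      next
        case (real v)
        obtain e where e: "us k x1 = ereal e" using ux1 conv_coeD(1)[OF uk[of k], of x1] by (cases "us k x1") auto
        have tpos: "0 < t" "t < 1" using t t0 t1 by auto
        have "c + 2 < (1 - t) * e + t * v"
        proof -
          have h: "us k w \<le> ereal ((1 - t) * e + t * v)"
            using \<open>us k w \<le> _\<close> e real by simp
          from less_le_trans[OF uw h] show ?thesis by simp
        qed
        moreover have "e < c" using ux1 e by simp
        ultimately have "c + 2 < (1 - t) * c + t * v"
          using tpos by (smt (verit) mult_strict_left_mono)
        then have A: "2 < t * (v - c)" by (simp add: algebra_simps)
        have "norm (w - x1) \<le> norm w + norm x1" by (rule norm_triangle_ineq4)
        then have "norm (w - x1) < 2 * R" using nw nx1 by simp
        moreover have "norm (w - x1) = t * norm (y - x1)" using w tpos by simp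
        moreover have "norm y - R < norm (y - x1)" using nx1 norm_triangle_ineq2[of y x1] by simp
        ultimately have B: "t * (norm y - R) < 2 * R" using tpos
          by (smt (verit) mult_strict_left_mono)
        have "R * (t * (v - c)) > R * 2" using A R0 by simp
        then have "t * (R * (v - c)) > t * (norm y - R)" using B by (simp add: algebra_simps)
        then have "R * (v - c) > norm y - R" using tpos by simp
        then have "v > c - 1 + norm y / R" using R0 by (simp add: field_simps)
        then have "\<alpha> + \<beta> * norm y \<le> v" unfolding \<alpha>_def \<beta>_def by simp
        then show ?thesis using real by simp
      qed
    qed
  qed
  moreover have "\<beta> > 0" using R0 unfolding \<beta>_def by simp
  ultimately show ?thesis by blast
qed



lemma conv_infty:
  fixes us :: "nat \<Rightarrow> 'a::metric_space \<Rightarrow> ereal"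
  assumes z0: "\<And>e. e > 0 \<Longrightarrow> \<exists>T. z T < e" and anti: "antimono z" and nn: "\<And>t. 0 \<le> z t"
    and epi: "epi_converges us u" and ux: "u x = \<infinity>"
  shows "(\<lambda>k. zeta_ext z (us k x)) \<longlonglongrightarrow> 0"
proof -
  have "\<forall>xs. xs \<longlonglongrightarrow> x \<longrightarrow> u x \<le> liminf (\<lambda>k. us k (xs k))"
    using epi unfolding epi_converges_def by blast
  from this[rule_format, OF tendsto_const] have "u x \<le> liminf (\<lambda>k. us k x)" .
  then have lim: "liminf (\<lambda>k. us k x) = \<infinity>" using ux by simp
  show ?thesis
    unfolding tendsto_iff
  proof (intro allI impI)
    fix e :: real assume e: "e > 0"
    obtain T where T: "z T < e" using z0[OF e] by blast
    have "eventually (\<lambda>k. ereal T < us k x) sequentially"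
      by (rule less_LiminfD) (simp add: lim)
    then show "eventually (\<lambda>k. dist (zeta_ext z (us k x)) 0 < e) sequentially"
    proof (rule eventually_mono)
      fix k assume h: "ereal T < us k x"
      show "dist (zeta_ext z (us k x)) 0 < e"
      proof (cases "us k x")
        case (real v)
        then have "T \<le> v" using h by simp
        then have "z v \<le> z T" using anti by (simp add: antimono_def)
        then show ?thesis using real T nn[of v] by (simp add: zeta_ext_def)
      qed (use h e in \<open>auto simp: zeta_ext_def\<close>)
    qed
  qed
qed

lemma exists_big_coord:
  fixes a :: "'a::euclidean_space"
  shows "\<exists>i\<in>Basis. norm a / DIM('a) \<le> \<bar>inner a i\<bar>"
proof (rule ccontr)
  assume "\<not> ?thesis"
  then have "\<And>i. i \<in> Basis \<Longrightarrow> \<bar>inner a i\<bar> < norm a / DIM('a)" by force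
  then have "(\<Sum>i\<in>Basis. \<bar>inner a i\<bar>) < (\<Sum>i\<in>(Basis::'a set). norm a / DIM('a))"
    by (intro sum_strict_mono) auto
  also have "\<dots> = norm a" by simp
  finally show False using norm_le_l1[of a] by simp
qed

lemma local_upper:
  fixes us :: "nat \<Rightarrow> 'a::euclidean_space \<Rightarrow> ereal"
  assumes epi: "epi_converges us u" and cv: "\<And>k. convex_fun (us k)"
    and d: "\<delta> > 0" and sub: "cball y \<delta> \<subseteq> {z. u z < \<infinity>}"
  shows "\<exists>M K. \<forall>k\<ge>K. \<forall>z\<in>ball y (\<delta> / (2 * real DIM('a))). us k z \<le> ereal M"
proof -
  define n where "n = real DIM('a)"
  have n1: "n \<ge> 1" unfolding n_def by (simp add: DIM_positive Suc_le_eq)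
  define \<rho> where "\<rho> = \<delta> / (2 * n)"
  have \<rho>: "\<rho> > 0" unfolding \<rho>_def using d n1 by simp
  define V where "V = (\<lambda>i. y + \<delta> *\<^sub>R i) ` Basis \<union> (\<lambda>i. y - \<delta> *\<^sub>R i) ` (Basis :: 'a set)"
  have finV: "finite V" unfolding V_def by simp
  have "\<forall>v\<in>V. \<exists>xs B. xs \<longlonglongrightarrow> v \<and> eventually (\<lambda>k. us k (xs k) < ereal B) sequentially"
  proof
    fix v assume v: "v \<in> V"
    then have "dist y v \<le> \<delta>" unfolding V_def using d by (auto simp: dist_norm)
    then have uv: "u v < \<infinity>" using sub by auto
    obtain xs where xs: "xs \<longlonglongrightarrow> v" and l: "limsup (\<lambda>k. us k (xs k)) \<le> u v"
      using epi unfolding epi_converges_def by blast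
    obtain B where B: "u v < ereal B"
    proof (cases "u v")
      case (real r) then show ?thesis by (intro that[of "r + 1"]) simp
    next
      case MInf then show ?thesis by (intro that[of 0]) simp
    qed (use uv in simp)
    have "eventually (\<lambda>k. us k (xs k) < ereal B) sequentially"
      by (rule Limsup_lessD) (use l B in auto)
    with xs show "\<exists>xs B. xs \<longlonglongrightarrow> v \<and> eventually (\<lambda>k. us k (xs k) < ereal B) sequentially" by blast
  qed
  from bchoice[OF this] obtain X where X: "\<forall>v\<in>V. \<exists>B. X v \<longlonglongrightarrow> v \<and> eventually (\<lambda>k. us k (X v k) < ereal B) sequentially"
    by blast
  from bchoice[OF X] obtain Bf where XB': "\<forall>v\<in>V. X v \<longlonglongrightarrow> v \<and> eventually (\<lambda>k. us k (X v k) < ereal (Bf v)) sequentially"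
    by blast
  then have XB: "\<And>v. v \<in> V \<Longrightarrow> X v \<longlonglongrightarrow> v \<and> eventually (\<lambda>k. us k (X v k) < ereal (Bf v)) sequentially"
    by blast
  have "\<forall>v\<in>V. eventually (\<lambda>k. us k (X v k) < ereal (Bf v) \<and> dist (X v k) v < \<rho>) sequentially"
  proof
    fix v assume v: "v \<in> V"
    have "eventually (\<lambda>k. dist (X v k) v < \<rho>) sequentially" using XB[OF v] \<rho> by (intro tendstoD) auto
    then show "eventually (\<lambda>k. us k (X v k) < ereal (Bf v) \<and> dist (X v k) v < \<rho>) sequentially"
      using XB[OF v] eventually_conj by blast
  qed
  then have "eventually (\<lambda>k. \<forall>v\<in>V. us k (X v k) < ereal (Bf v) \<and> dist (X v k) v < \<rho>) sequentially"
    by (rule eventually_ball_finite[OF finV])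
  then obtain K where K: "\<And>k v. k \<ge> K \<Longrightarrow> v \<in> V \<Longrightarrow> us k (X v k) < ereal (Bf v) \<and> dist (X v k) v < \<rho>"
    unfolding eventually_sequentially by blast
  define M where "M = Max (Bf ` V)"
  have "\<forall>k\<ge>K. \<forall>z\<in>ball y \<rho>. us k z \<le> ereal M"
  proof (intro allI impI ballI)
    fix k z assume k: "K \<le> k" and z: "z \<in> ball y \<rho>"
    define W where "W = (\<lambda>v. X v k) ` V"
    have "W \<subseteq> {z. us k z \<le> ereal M}"
    proof
      fix w assume "w \<in> W"
      then obtain v where v: "v \<in> V" "w = X v k" unfolding W_def by blast
      have "Bf v \<le> M" unfolding M_def using finV v by simp
      moreover have "us k w < ereal (Bf v)" using K[OF k v(1)] v by simp
      ultimately show "w \<in> {z. us k z \<le> ereal M}" by (simp add: order.trans[OF less_imp_le])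
    qed
    then have hullW: "convex hull W \<subseteq> {z. us k z \<le> ereal M}"
      by (intro hull_minimal convex_sublevel cv)
    have "z \<in> convex hull W"
    proof (rule ccontr)
      assume nz: "z \<notin> convex hull W"
      have "closed (convex hull W)" unfolding W_def
        by (intro compact_imp_closed compact_convex_hull finite_imp_compact finite_imageI finV)
      then obtain a b where ab: "inner a z < b" "\<And>x. x \<in> convex hull W \<Longrightarrow> b < inner a x"
        using separating_hyperplane_closed_point[OF convex_convex_hull _ nz] by blast
      obtain i where i: "i \<in> Basis" "norm a / n \<le> \<bar>inner a i\<bar>"
        using exists_big_coord[of a] unfolding n_def by blast
      define v where "v = (if inner a i \<ge> 0 then y - \<delta> *\<^sub>R i else y + \<delta> *\<^sub>R i)"
      have vV: "v \<in> V" unfolding v_def V_def using i by auto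
      have iv: "inner a v = inner a y - \<delta> * \<bar>inner a i\<bar>"
        unfolding v_def by (auto simp: inner_diff_right inner_add_right)
      define w where "w = X v k"
      have "w \<in> convex hull W" unfolding w_def W_def using vV by (auto intro: hull_inc)
      then have bw: "b < inner a w" by (rule ab(2))
      have dwv: "dist w v < \<rho>" using K[OF k vV] w_def by simp
      have "inner a w - inner a v = inner a (w - v)" by (simp add: inner_diff_right)
      also have "\<dots> \<le> norm a * norm (w - v)" using Cauchy_Schwarz_ineq2[of a "w - v"] by linarith
      also have "\<dots> \<le> norm a * \<rho>" using dwv by (intro mult_left_mono) (auto simp: dist_norm)
      finally have A: "inner a w \<le> inner a v + norm a * \<rho>" by simp
      have "inner a y - inner a z = inner a (y - z)" by (simp add: inner_diff_right)
      also have "\<dots> \<le> norm a * norm (y - z)" using Cauchy_Schwarz_ineq2[of a "y - z"] by linarith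
      also have "\<dots> \<le> norm a * \<rho>" using z by (intro mult_left_mono) (auto simp: dist_norm)
      finally have B: "inner a y - norm a * \<rho> \<le> inner a z" by simp
      have "\<delta> * (norm a / n) \<le> \<delta> * \<bar>inner a i\<bar>" using i d by (intro mult_left_mono) auto
      moreover have "\<delta> * (norm a / n) = 2 * (norm a * \<rho>)" unfolding \<rho>_def using n1 by (simp add: field_simps)
      ultimately have "inner a w \<le> inner a y - norm a * \<rho>" using A iv by linarith
      then show False using B bw ab(1) by linarith
    qed
    then show "us k z \<le> ereal M" using hullW by blast
  qed
  then show ?thesis unfolding \<rho>_def n_def by blast
qed



lemma zeta_small:
  fixes z :: "real \<Rightarrow> real"
  assumes nn: "\<And>t. 0 \<le> z t" and p: "0 < p"
    and I: "(\<integral>\<^sup>+ t. ennreal (z t powr p * t ^ d) * indicator {0..} t \<partial>lborel) < \<infinity>"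
    and e: "e > 0"
  shows "\<exists>T. z T < e"
proof (rule ccontr)
  assume "\<not> ?thesis"
  then have ge: "\<And>T. e \<le> z T" by (simp add: not_less)
  define I where "I = (\<integral>\<^sup>+ t. ennreal (z t powr p * t ^ d) * indicator {0..} t \<partial>lborel)"
  obtain r where r: "I = ennreal r" "r \<ge> 0" using I unfolding I_def[symmetric]
    by (cases I) (auto simp: top_unique)
  define c where "c = e powr p"
  have c: "c > 0" unfolding c_def using e by simp
  have bound: "c * real N \<le> r" for N :: nat
  proof -
    have "ennreal (c * real N) = (\<integral>\<^sup>+ t. ennreal c * indicator {1..1 + real N} t \<partial>lborel)"
      using c by (subst nn_integral_cmult_indicator) (auto simp: ennreal_mult)
    also have "\<dots> \<le> I" unfolding I_def
    proof (rule nn_integral_mono)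
      fix t :: real
      show "ennreal c * indicator {1..1 + real N} t \<le> ennreal (z t powr p * t ^ d) * indicator {0..} t"
      proof (cases "t \<in> {1..1 + real N}")
        case True
        then have t1: "1 \<le> t" by simp
        have "c \<le> z t powr p" unfolding c_def using ge[of t] e p by (intro powr_mono2) auto
        also have "\<dots> = z t powr p * 1" by simp
        also have "\<dots> \<le> z t powr p * t ^ d" using t1 by (intro mult_left_mono one_le_power) auto
        finally show ?thesis using True by (simp add: indicator_def)
      qed simp
    qed
    finally show ?thesis using r by (auto simp: ennreal_le_iff2)
  qed
  define N where "N = nat (ceiling (r / c)) + 1"
  have "r / c < real N" unfolding N_def by linarith
  then have "r < c * real N" using c by (simp add: field_simps)
  then show False using bound[of N] by simp
qed

lemma conv_interior:
  fixes us :: "nat \<Rightarrow> 'a::euclidean_space \<Rightarrow> ereal"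
  assumes epi: "epi_converges us u" and uk: "\<And>k. us k \<in> Conv_coe" and u: "u \<in> Conv_coe"
    and zc: "continuous_on UNIV z" and x: "x \<in> interior {y. u y < \<infinity>}"
  shows "(\<lambda>k. zeta_ext z (us k x)) \<longlonglongrightarrow> zeta_ext z (u x)"
proof -
  obtain \<delta> where d: "\<delta> > 0" and sub: "cball x \<delta> \<subseteq> {y. u y < \<infinity>}"
    using x unfolding mem_interior_cball by blast
  have "x \<in> cball x \<delta>" using d by simp
  then have "u x < \<infinity>" using sub by blast
  then obtain a where a: "u x = ereal a" using conv_coeD(1)[OF u, of x] by (cases "u x") auto
  obtain M K where MK: "\<And>k y. k \<ge> K \<Longrightarrow> y \<in> ball x (\<delta> / (2 * real DIM('a))) \<Longrightarrow> us k y \<le> ereal M"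
    using local_upper[OF epi conv_coeD(4)[OF uk] d sub] by blast
  define \<rho> where "\<rho> = \<delta> / (2 * real DIM('a))"
  have \<rho>: "\<rho> > 0" unfolding \<rho>_def using d by simp
  obtain xs where xs: "xs \<longlonglongrightarrow> x" and xsl: "limsup (\<lambda>k. us k (xs k)) \<le> u x"
    using epi unfolding epi_converges_def by blast
  have "\<forall>xs. xs \<longlonglongrightarrow> x \<longrightarrow> u x \<le> liminf (\<lambda>k. us k (xs k))"
    using epi unfolding epi_converges_def by blast
  from this[rule_format, OF tendsto_const] have lif: "u x \<le> liminf (\<lambda>k. us k x)" .
  have key: "eventually (\<lambda>k. ereal (a - \<eta>) < us k x \<and> us k x < ereal (a + \<eta>)) sequentially"
    if eta: "\<eta> > 0" for \<eta>
  proof -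
    have lo: "eventually (\<lambda>k. ereal (a - \<eta>) < us k x) sequentially"
    proof (rule less_LiminfD)
      have "ereal (a - \<eta>) < ereal a" using eta by simp
      also have "\<dots> \<le> liminf (\<lambda>k. us k x)" using lif a by simp
      finally show "ereal (a - \<eta>) < liminf (\<lambda>k. us k x)" .
    qed
    define D where "D = \<bar>M\<bar> + \<bar>a\<bar> + \<eta> + 1"
    have D: "D > 0" "\<eta> < D" unfolding D_def using eta by auto
    define t where "t = \<eta> / (4 * D)"
    have t0: "0 < t" unfolding t_def using D eta by simp
    have t1: "t < 1" unfolding t_def using D eta by (simp add: field_simps)
    have ev1: "eventually (\<lambda>k. us k (xs k) < ereal (a + \<eta> / 2)) sequentially"
    proof (rule Limsup_lessD)
      have "limsup (\<lambda>k. us k (xs k)) \<le> ereal a" using xsl a by simp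
      then show "limsup (\<lambda>k. us k (xs k)) < ereal (a + \<eta> / 2)" by (rule le_less_trans) (use eta in simp)
    qed
    define zk where "zk k = x + ((1 - t) / t) *\<^sub>R (x - xs k)" for k
    have "zk \<longlonglongrightarrow> x + ((1 - t) / t) *\<^sub>R (x - x)"
      unfolding zk_def by (intro tendsto_intros xs)
    then have "zk \<longlonglongrightarrow> x" by simp
    then have ev2: "eventually (\<lambda>k. dist (zk k) x < \<rho>) sequentially" using \<rho> by (rule tendstoD)
    have ev3: "eventually (\<lambda>k. k \<ge> K) sequentially" by (rule eventually_ge_at_top)
    have hi: "eventually (\<lambda>k. us k x < ereal (a + \<eta>)) sequentially"
      using ev1 ev2 ev3
    proof eventually_elim
      case (elim k)
      have "t *\<^sub>R zk k = t *\<^sub>R x + (1 - t) *\<^sub>R (x - xs k)"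
        using t0 by (simp add: zk_def scaleR_add_right)
      then have xe: "x = (1 - t) *\<^sub>R xs k + t *\<^sub>R zk k" by (simp add: algebra_simps)
      have "us k x \<le> ereal (1 - t) * us k (xs k) + ereal t * us k (zk k)"
        using conv_coeD(4)[OF uk[of k]] t0 t1 xe unfolding convex_fun_def by metis
      also have "\<dots> \<le> ereal (1 - t) * ereal (a + \<eta> / 2) + ereal t * ereal M"
      proof (intro add_mono ereal_mult_left_mono)
        show "us k (xs k) \<le> ereal (a + \<eta> / 2)" using elim by simp
        show "us k (zk k) \<le> ereal M" using MK[of k "zk k"] elim unfolding \<rho>_def by (simp add: dist_commute)
      qed (use t0 t1 in auto)
      also have "\<dots> = ereal ((1 - t) * (a + \<eta> / 2) + t * M)" by simp
      also have "\<dots> < ereal (a + \<eta>)"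
      proof -
        have "t * (M - a - \<eta> / 2) \<le> t * D" unfolding D_def using t0 eta by (intro mult_left_mono) auto
        moreover have "t * D = \<eta> / 4" unfolding t_def using D by simp
        moreover have "t * (M - a - \<eta> / 2) = t * M - t * a - t * (\<eta> / 2)" by (simp add: field_simps)
        moreover have "(1 - t) * (a + \<eta> / 2) + t * M = a + \<eta> / 2 - t * a - t * (\<eta> / 2) + t * M"
          by (simp add: field_simps)
        ultimately have "(1 - t) * (a + \<eta> / 2) + t * M \<le> a + \<eta> / 2 + \<eta> / 4" by (smt (verit))
        then show ?thesis using eta by simp
      qed
      finally show ?case .
    qed
    show ?thesis using lo hi by (rule eventually_conj)
  qed
  have zca: "isCont z a" using zc by (simp add: continuous_on_eq_continuous_at)
  show ?thesis
    unfolding tendsto_iff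
  proof (intro allI impI)
    fix e :: real assume e: "e > 0"
    obtain \<eta> where eta: "\<eta> > 0" and h: "\<And>v. dist v a < \<eta> \<Longrightarrow> dist (z v) (z a) < e"
      using zca e unfolding continuous_at_eps_delta by blast
    show "eventually (\<lambda>k. dist (zeta_ext z (us k x)) (zeta_ext z (u x)) < e) sequentially"
      using key[OF eta]
    proof (rule eventually_mono)
      fix k assume hk: "ereal (a - \<eta>) < us k x \<and> us k x < ereal (a + \<eta>)"
      then obtain v where v: "us k x = ereal v" by (cases "us k x") auto
      then have "dist v a < \<eta>" using hk by (simp add: dist_real_def abs_less_iff)
      then show "dist (zeta_ext z (us k x)) (zeta_ext z (u x)) < e"
        using h v a by (simp add: zeta_ext_def)
    qed
  qed
qed



lemma ae_conv:
  fixes us :: "nat \<Rightarrow> 'a::euclidean_space \<Rightarrow> ereal"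
  assumes epi: "epi_converges us u" and uk: "\<And>k. us k \<in> Conv_coe" and u: "u \<in> Conv_coe"
    and zc: "continuous_on UNIV z" and z0: "\<And>e. e > 0 \<Longrightarrow> \<exists>T. z T < e"
    and anti: "antimono z" and nn: "\<And>t. 0 \<le> z t"
  shows "AE x in lborel. (\<lambda>k. zeta_ext z (us k x)) \<longlonglongrightarrow> zeta_ext z (u x)"
proof (rule AE_I')
  define D where "D = {y. u y < \<infinity>}"
  have "negligible (frontier D)" unfolding D_def
    by (intro negligible_convex_frontier convex_dom conv_coeD(4)[OF u])
  then show "frontier D \<in> null_sets lborel"
    by (auto simp: null_sets_completion_iff negligible_iff_null_sets)
  show "{x \<in> space lborel. \<not> (\<lambda>k. zeta_ext z (us k x)) \<longlonglongrightarrow> zeta_ext z (u x)} \<subseteq> frontier D"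
  proof (rule subsetI, rule ccontr)
    fix x assume x: "x \<in> {x \<in> space lborel. \<not> (\<lambda>k. zeta_ext z (us k x)) \<longlonglongrightarrow> zeta_ext z (u x)}"
      and nf: "x \<notin> frontier D"
    show False
    proof (cases "u x = \<infinity>")
      case True
      have "(\<lambda>k. zeta_ext z (us k x)) \<longlonglongrightarrow> 0" using conv_infty[OF z0 anti nn epi True] by simp
      moreover have "zeta_ext z (u x) = 0" using True by (simp add: zeta_ext_def)
      ultimately show False using x by simp
    next
      case False
      then have "x \<in> D" unfolding D_def by (simp add: less_top)
      then have "x \<in> closure D" using closure_subset by blast
      then have "x \<in> interior D" using nf unfolding frontier_def by blast
      then have "(\<lambda>k. zeta_ext z (us k x)) \<longlonglongrightarrow> zeta_ext z (u x)"
        unfolding D_def by (rule conv_interior[OF epi uk u zc])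
      then show False using x by simp
    qed
  qed
qed



lemma pow_diff_le:
  fixes x :: real assumes "0 \<le> x"
  shows "(x + 1) ^ Suc m - x ^ Suc m \<le> real (Suc m) * (x + 1) ^ m"
proof (induction m)
  case 0 then show ?case by simp
next
  case (Suc m)
  have "(x + 1) ^ Suc (Suc m) - x ^ Suc (Suc m) = (x + 1) ^ Suc m + x * ((x + 1) ^ Suc m - x ^ Suc m)"
    by (simp add: algebra_simps)
  also have "\<dots> \<le> (x + 1) ^ Suc m + x * (real (Suc m) * (x + 1) ^ m)"
    using Suc assms by (intro add_left_mono mult_left_mono) auto
  also have "x * (real (Suc m) * (x + 1) ^ m) \<le> (x + 1) * (real (Suc m) * (x + 1) ^ m)"
    using assms by (intro mult_right_mono) auto
  also have "(x + 1) * (real (Suc m) * (x + 1) ^ m) = real (Suc m) * (x + 1) ^ Suc m" by simp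
  finally show ?case by (simp add: algebra_simps)
qed

lemma radial_shells:
  fixes g :: "real \<Rightarrow> real"
  assumes nn: "\<And>t. 0 \<le> g t" and mono: "\<And>s t. 0 \<le> s \<Longrightarrow> s \<le> t \<Longrightarrow> g t \<le> g s"
  shows "(\<integral>\<^sup>+y. ennreal (g (norm (y::'a::euclidean_space))) \<partial>lborel) \<le>
    (\<Sum>j. ennreal (g (real j) * unit_ball_vol (real DIM('a)) * real DIM('a) * (real j + 1) ^ (DIM('a) - 1)))"
proof -
  define V where "V = unit_ball_vol (real DIM('a))"
  have V: "V \<ge> 0" unfolding V_def by simp
  define S where "S j = ball (0::'a) (real j + 1) - ball 0 (real j)" for j :: nat
  have Sm: "S j \<in> sets lborel" for j unfolding S_def by auto
  have "(\<integral>\<^sup>+y. ennreal (g (norm (y::'a))) \<partial>lborel) \<le> (\<integral>\<^sup>+y. (\<Sum>j. ennreal (g (real j)) * indicator (S j) y) \<partial>lborel)"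
  proof (rule nn_integral_mono)
    fix y :: 'a
    define j0 where "j0 = nat (floor (norm y))"
    have fl: "0 \<le> floor (norm y)" by simp
    have j0: "real j0 \<le> norm y" "norm y < real j0 + 1" unfolding j0_def using fl
      by (simp_all add: of_nat_nat)
    then have yS: "y \<in> S j0" unfolding S_def by auto
    have "ennreal (g (norm y)) \<le> ennreal (g (real j0))" using mono[OF _ j0(1)] by (simp add: ennreal_leI)
    also have "\<dots> = (\<Sum>j\<in>{j0}. ennreal (g (real j)) * indicator (S j) y)" using yS by simp
    also have "\<dots> \<le> (\<Sum>j. ennreal (g (real j)) * indicator (S j) y)"
      by (rule sum_le_suminf) auto
    finally show "ennreal (g (norm y)) \<le> (\<Sum>j. ennreal (g (real j)) * indicator (S j) y)" .
  qed
  also have "\<dots> = (\<Sum>j. ennreal (g (real j)) * emeasure lborel (S j))"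
  proof (subst nn_integral_suminf)
    show "(\<lambda>y. ennreal (g (real i)) * indicator (S i) y) \<in> borel_measurable lborel" for i
      using Sm[of i] by (intro borel_measurable_times_ennreal borel_measurable_const borel_measurable_indicator) auto
    show "(\<Sum>i. \<integral>\<^sup>+ y. ennreal (g (real i)) * indicator (S i) y \<partial>lborel) = (\<Sum>j. ennreal (g (real j)) * emeasure lborel (S j))"
      by (intro suminf_cong nn_integral_cmult_indicator Sm)
  qed
  also have "\<dots> \<le> (\<Sum>j. ennreal (g (real j) * V * real DIM('a) * (real j + 1) ^ (DIM('a) - 1)))"
  proof (rule suminf_le)
    fix j :: nat
    have "emeasure lborel (S j) = emeasure lborel (ball (0::'a) (real j + 1)) - emeasure lborel (ball (0::'a) (real j))"
      unfolding S_def by (rule emeasure_Diff) (auto simp: emeasure_ball)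
    also have "\<dots> = ennreal (V * (real j + 1) ^ DIM('a) - V * real j ^ DIM('a))"
      unfolding V_def by (simp add: emeasure_ball ennreal_minus)
    also have "\<dots> \<le> ennreal (V * (real DIM('a) * (real j + 1) ^ (DIM('a) - 1)))"
    proof (rule ennreal_leI)
      obtain m where m: "DIM('a) = Suc m" using DIM_positive[where 'a='a] by (cases "DIM('a)") auto
      have "(real j + 1) ^ Suc m - real j ^ Suc m \<le> real (Suc m) * (real j + 1) ^ m"
        by (rule pow_diff_le) simp
      then have "V * ((real j + 1) ^ Suc m - real j ^ Suc m) \<le> V * (real (Suc m) * (real j + 1) ^ m)"
        using V by (rule mult_left_mono)
      then show "V * (real j + 1) ^ DIM('a) - V * real j ^ DIM('a) \<le> V * (real DIM('a) * (real j + 1) ^ (DIM('a) - 1))"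
        unfolding m by (simp add: algebra_simps)
    qed
    finally have "ennreal (g (real j)) * emeasure lborel (S j) \<le> ennreal (g (real j)) * ennreal (V * (real DIM('a) * (real j + 1) ^ (DIM('a) - 1)))"
      by (rule mult_left_mono) simp
    also have "\<dots> = ennreal (g (real j) * V * real DIM('a) * (real j + 1) ^ (DIM('a) - 1))"
      using nn V by (simp add: ennreal_mult[symmetric] mult.assoc)
    finally show "ennreal (g (real j)) * emeasure lborel (S j) \<le> ennreal (g (real j) * V * real DIM('a) * (real j + 1) ^ (DIM('a) - 1))" .
  qed auto
  finally show ?thesis unfolding V_def .
qed

lemma series_finite:
  fixes z :: "real \<Rightarrow> real"
  assumes zc: "continuous_on UNIV z" and nn: "\<And>t. 0 \<le> z t" and anti: "antimono z" and p: "0 \<le> p"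
    and I: "(\<integral>\<^sup>+ t. ennreal (z t powr p * t ^ m) * indicator {0..} t \<partial>lborel) < \<infinity>"
    and b: "\<beta> > 0" and K0: "K0 \<ge> 0"
  shows "(\<Sum>j. ennreal (z (\<alpha> + \<beta> * real j) powr p * K0 * (real j + 1) ^ m)) < \<infinity>"
proof -
  define G where "G t = z t powr p" for t
  have Gnn: "0 \<le> G t" for t unfolding G_def by simp
  have Gmono: "G t \<le> G s" if "s \<le> t" for s t
    unfolding G_def using anti that nn p by (intro powr_mono2) (auto simp: antimono_def)
  define J where "J = nat (ceiling (3 + 2 * \<bar>\<alpha>\<bar> / \<beta>))"
  define s where "s j = \<alpha> + \<beta> * (real j - 1)" for j :: nat
  have sJ: "\<beta> * (real j + 1) / 2 \<le> s j" if "J \<le> j" for j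
  proof -
    have "3 + 2 * \<bar>\<alpha>\<bar> / \<beta> \<le> real j" using that unfolding J_def by linarith
    then have "\<beta> * (3 + 2 * \<bar>\<alpha>\<bar> / \<beta>) \<le> \<beta> * real j" using b by (intro mult_left_mono) auto
    moreover have "\<beta> * (3 + 2 * \<bar>\<alpha>\<bar> / \<beta>) = 3 * \<beta> + 2 * \<bar>\<alpha>\<bar>" using b by (simp add: field_simps)
    ultimately have "3 * \<beta> + 2 * \<bar>\<alpha>\<bar> \<le> \<beta> * real j" by linarith
    then show ?thesis unfolding s_def by (simp add: field_simps)
  qed
  have s0: "0 < s j" if "J \<le> j" for j
  proof -
    have "0 < \<beta> * (real j + 1) / 2" using b by simp
    then show ?thesis using sJ[OF that] by linarith
  qed
  define T where "T j = (if J \<le> j then {s j ..< s j + \<beta>} else {})" for j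
  define f where "f t = ennreal (z t powr p * t ^ m) * indicator {0..} t" for t :: real
  have [measurable]: "z \<in> borel_measurable borel" using zc by (rule borel_measurable_continuous_onI)
  have fm[measurable]: "f \<in> borel_measurable lborel" unfolding f_def by measurable
  have Tm[measurable]: "T j \<in> sets lborel" for j unfolding T_def by auto
  define bb where "bb j = (\<integral>\<^sup>+t. f t * indicator (T j) t \<partial>lborel)" for j
  define c where "c j = ennreal (z (\<alpha> + \<beta> * real j) powr p * K0 * (real j + 1) ^ m)" for j
  define C where "C = ennreal (K0 * (2 / \<beta>) ^ m / \<beta>)"
  have cle: "c j \<le> (if j < J then c j else 0) + C * bb j" for j
  proof (cases "j < J")
    case True then show ?thesis by (simp add: add_increasing2)
  next
    case False
    then have jJ: "J \<le> j" by simp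
    have sj0: "0 < s j" by (rule s0[OF jJ])
    have "ennreal (G (\<alpha> + \<beta> * real j) * s j ^ m) * ennreal \<beta> =
        (\<integral>\<^sup>+t. ennreal (G (\<alpha> + \<beta> * real j) * s j ^ m) * indicator (T j) t \<partial>lborel)"
      using jJ b by (subst nn_integral_cmult_indicator) (auto simp: T_def)
    also have "\<dots> \<le> bb j" unfolding bb_def
    proof (rule nn_integral_mono)
      fix t
      show "ennreal (G (\<alpha> + \<beta> * real j) * s j ^ m) * indicator (T j) t \<le> f t * indicator (T j) t"
      proof (cases "t \<in> T j")
        case True
        then have t: "s j \<le> t" "t < s j + \<beta>" using jJ by (auto simp: T_def)
        have "t \<le> \<alpha> + \<beta> * real j" using t(2) unfolding s_def by (simp add: algebra_simps)
        then have "G (\<alpha> + \<beta> * real j) \<le> G t" by (rule Gmono)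
        moreover have "s j ^ m \<le> t ^ m" using t sj0 by (intro power_mono) auto
        ultimately have "G (\<alpha> + \<beta> * real j) * s j ^ m \<le> G t * t ^ m"
          using Gnn sj0 by (intro mult_mono) auto
        moreover have "0 \<le> t" using t sj0 by simp
        ultimately show ?thesis using True unfolding f_def G_def by (simp add: ennreal_leI)
      qed simp
    qed
    finally have bbj: "ennreal (G (\<alpha> + \<beta> * real j) * s j ^ m) * ennreal \<beta> \<le> bb j" .
    have "real j + 1 \<le> (2 / \<beta>) * s j" using sJ[OF jJ] b by (simp add: field_simps)
    then have "(real j + 1) ^ m \<le> ((2 / \<beta>) * s j) ^ m" by (intro power_mono) auto
    then have "G (\<alpha> + \<beta> * real j) * K0 * (real j + 1) ^ m \<le> G (\<alpha> + \<beta> * real j) * K0 * ((2 / \<beta>) * s j) ^ m"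
      using Gnn K0 by (intro mult_left_mono) auto
    also have "\<dots> = (K0 * (2 / \<beta>) ^ m / \<beta>) * (G (\<alpha> + \<beta> * real j) * s j ^ m * \<beta>)"
      using b by (simp add: power_mult_distrib field_simps)
    finally have "c j \<le> ennreal ((K0 * (2 / \<beta>) ^ m / \<beta>) * (G (\<alpha> + \<beta> * real j) * s j ^ m * \<beta>))"
      unfolding c_def G_def by (rule ennreal_leI)
    also have "\<dots> = C * (ennreal (G (\<alpha> + \<beta> * real j) * s j ^ m) * ennreal \<beta>)"
      unfolding C_def using K0 b Gnn sj0 by (simp add: ennreal_mult[symmetric] mult.assoc)
    also have "\<dots> \<le> C * bb j" using bbj by (rule mult_left_mono) simp
    finally show ?thesis using False by simp
  qed
  have "(\<Sum>j. bb j) = (\<integral>\<^sup>+t. (\<Sum>j. f t * indicator (T j) t) \<partial>lborel)"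
    unfolding bb_def by (subst nn_integral_suminf) auto
  also have "\<dots> = (\<integral>\<^sup>+t. f t * indicator (\<Union>j. T j) t \<partial>lborel)"
  proof -
    have "disjoint_family T"
      unfolding disjoint_family_on_def
    proof (intro ballI impI)
      have *: "T i \<inter> T j = {}" if "i < j" for i j
      proof (cases "J \<le> i")
        case True
        have "s i + \<beta> \<le> s j"
        proof -
          have "real i + 1 \<le> real j" using that by simp
          then have "\<beta> * (real i + 1) \<le> \<beta> * real j" using b by (intro mult_left_mono) auto
          then show ?thesis unfolding s_def by (simp add: algebra_simps)
        qed
        then show ?thesis using True that by (auto simp: T_def)
      qed (auto simp: T_def)
      fix i j :: nat assume "i \<in> UNIV" "j \<in> UNIV" "i \<noteq> j"
      then show "T i \<inter> T j = {}" using *[of i j] *[of j i] by (cases "i < j") auto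
    qed
    then show ?thesis by (simp add: suminf_indicator)
  qed
  also have "\<dots> \<le> (\<integral>\<^sup>+t. f t \<partial>lborel)"
    by (rule nn_integral_mono) (auto simp: indicator_def)
  finally have sbb: "(\<Sum>j. bb j) \<le> (\<integral>\<^sup>+t. f t \<partial>lborel)" .
  have "(\<Sum>j. c j) \<le> (\<Sum>j. (if j < J then c j else 0) + C * bb j)"
    by (rule suminf_le[OF cle]) auto
  also have "\<dots> = (\<Sum>j. (if j < J then c j else 0)) + C * (\<Sum>j. bb j)"
    by (subst suminf_add[symmetric]) auto
  also have "(\<Sum>j. (if j < J then c j else 0)) = (\<Sum>j\<in>{..<J}. (if j < J then c j else 0))"
    by (rule suminf_finite) auto
  also have "(\<Sum>j\<in>{..<J}. (if j < J then c j else 0)) + C * (\<Sum>j. bb j) \<le> (\<Sum>j\<in>{..<J}. (if j < J then c j else 0)) + C * (\<integral>\<^sup>+t. f t \<partial>lborel)"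
    using sbb by (intro add_left_mono mult_left_mono) simp_all
  also have "(\<Sum>j\<in>{..<J}. (if j < J then c j else 0)) + C * (\<integral>\<^sup>+t. f t \<partial>lborel) < \<infinity>"
    using I unfolding f_def[symmetric] C_def c_def by (auto simp: ennreal_mult_less_top)
  finally show ?thesis unfolding c_def .
qed



theorem lemma3p3:
  fixes \<zeta> :: "real \<Rightarrow> real" and p :: real
    and us :: "nat \<Rightarrow> 'a::euclidean_space \<Rightarrow> ereal" and u :: "'a \<Rightarrow> ereal"
  assumes "1 \<le> p"
    and "continuous_on UNIV \<zeta>"
    and "\<And>t. 0 \<le> \<zeta> t"
    and "antimono \<zeta>"
    and "(\<integral>\<^sup>+ t. ennreal (\<zeta> t powr p * t ^ (DIM('a) - 1)) * indicator {0..} t \<partial>lborel) < \<infinity>"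
    and "\<And>k. us k \<in> Conv_coe"
    and "u \<in> Conv_coe"
    and "epi_converges us u"
  shows "(\<lambda>k. delta_zeta_p \<zeta> p (us k) u) \<longlonglongrightarrow> 0"
proof -
  note p1 = assms(1) and zc = assms(2) and nn = assms(3) and anti = assms(4) and I = assms(5)
    and uk = assms(6) and u = assms(7) and epi = assms(8)
  have p0: "0 < p" using p1 by simp
  have z0: "\<exists>T. \<zeta> T < e" if "e > 0" for e
    by (rule zeta_small[OF nn p0 I that])
  obtain \<alpha> \<beta> K where b: "\<beta> > 0" and lb: "\<And>k y. k \<ge> K \<Longrightarrow> ereal (\<alpha> + \<beta> * norm y) \<le> us k y"
    using unif_coercive[OF epi uk u] by blast
  have [measurable]: "\<zeta> \<in> borel_measurable borel" using zc by (rule borel_measurable_continuous_onI)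
  have ukm[measurable]: "us k \<in> borel_measurable borel" for k by (rule lsc_measurable[OF conv_coeD(3)[OF uk]])
  have um[measurable]: "u \<in> borel_measurable borel" by (rule lsc_measurable[OF conv_coeD(3)[OF u]])
  define w where "w y = \<zeta> (\<alpha> + \<beta> * norm y) powr p" for y :: 'a
  have wm[measurable]: "w \<in> borel_measurable lborel" unfolding w_def by measurable
  have wint: "integrable lborel w"
  proof (rule integrableI_nonneg)
    show "w \<in> borel_measurable lborel" by (rule wm)
    show "AE x in lborel. 0 \<le> w x" unfolding w_def by simp
    define g where "g r = \<zeta> (\<alpha> + \<beta> * r) powr p" for r
    have "(\<integral>\<^sup>+y. ennreal (w y) \<partial>lborel) = (\<integral>\<^sup>+y. ennreal (g (norm (y::'a))) \<partial>lborel)"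
      unfolding w_def g_def by simp
    also have "\<dots> \<le> (\<Sum>j. ennreal (g (real j) * unit_ball_vol (real DIM('a)) * real DIM('a) * (real j + 1) ^ (DIM('a) - 1)))"
    proof (rule radial_shells)
      show "0 \<le> g t" for t unfolding g_def by simp
      show "g t \<le> g s" if "0 \<le> s" "s \<le> t" for s t
        unfolding g_def using anti that b nn p0
        by (intro powr_mono2) (auto simp: antimono_def intro: mult_left_mono)
    qed
    also have "\<dots> = (\<Sum>j. ennreal (\<zeta> (\<alpha> + \<beta> * real j) powr p * (unit_ball_vol (real DIM('a)) * real DIM('a)) * (real j + 1) ^ (DIM('a) - 1)))"
      unfolding g_def by (simp add: mult.assoc)
    also have "\<dots> < \<infinity>"
      by (rule series_finite[OF zc nn anti _ I b]) (use p0 in auto)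
    finally show "(\<integral>\<^sup>+y. ennreal (w y) \<partial>lborel) < \<infinity>" .
  qed
  have aec: "AE y in lborel. (\<lambda>k. zeta_ext \<zeta> (us k y)) \<longlonglongrightarrow> zeta_ext \<zeta> (u y)"
    by (rule ae_conv[OF epi uk u zc z0 anti nn])
  have zeb: "zeta_ext \<zeta> (us k y) \<le> \<zeta> (\<alpha> + \<beta> * norm y)" if "k \<ge> K" for k y
  proof (cases "us k y")
    case (real v)
    then have "\<alpha> + \<beta> * norm y \<le> v" using lb[OF that, of y] by simp
    then show ?thesis using anti real by (simp add: zeta_ext_def antimono_def)
  next
    case PInf then show ?thesis using nn by (simp add: zeta_ext_def)
  next
    case MInf then show ?thesis using lb[OF that, of y] by simp
  qed
  have zenn: "0 \<le> zeta_ext \<zeta> s" for s using nn by (cases s) (auto simp: zeta_ext_def)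
  have ueb: "AE y in lborel. zeta_ext \<zeta> (u y) \<le> \<zeta> (\<alpha> + \<beta> * norm y)"
    using aec
  proof eventually_elim
    case (elim y)
    show ?case by (rule LIMSEQ_le_const2[OF elim]) (use zeb in blast)
  qed
  have zkm[measurable]: "(\<lambda>y. zeta_ext \<zeta> (us k y)) \<in> borel_measurable lborel" for k
    by (rule zeta_ext_measurable[OF zc]) (simp add: ukm)
  have zum[measurable]: "(\<lambda>y. zeta_ext \<zeta> (u y)) \<in> borel_measurable lborel"
    by (rule zeta_ext_measurable[OF zc]) (simp add: um)
  define s where "s k y = \<bar>zeta_ext \<zeta> (us (k + K) y) - zeta_ext \<zeta> (u y)\<bar> powr p" for k y
  have sm[measurable]: "s k \<in> borel_measurable lborel" for k
    unfolding s_def by measurable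
  have slim: "AE y in lborel. (\<lambda>k. s k y) \<longlonglongrightarrow> 0"
    using aec
  proof eventually_elim
    case (elim y)
    have l1: "(\<lambda>k. zeta_ext \<zeta> (us (k + K) y)) \<longlonglongrightarrow> zeta_ext \<zeta> (u y)"
      by (rule LIMSEQ_ignore_initial_segment[OF elim])
    have "(\<lambda>k. zeta_ext \<zeta> (us (k + K) y) - zeta_ext \<zeta> (u y)) \<longlonglongrightarrow> 0"
      using tendsto_diff[OF l1 tendsto_const[of "zeta_ext \<zeta> (u y)"]] by simp
    then have "(\<lambda>k. \<bar>zeta_ext \<zeta> (us (k + K) y) - zeta_ext \<zeta> (u y)\<bar>) \<longlonglongrightarrow> 0"
      using tendsto_rabs_zero by blast
    then show ?case unfolding s_def
      by (rule tendsto_zero_powrI) (use p0 in auto)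
  qed
  have sbound: "AE y in lborel. norm (s k y) \<le> w y" for k
    using ueb
  proof eventually_elim
    case (elim y)
    have a: "zeta_ext \<zeta> (us (k + K) y) \<le> \<zeta> (\<alpha> + \<beta> * norm y)" by (rule zeb) simp
    have "\<bar>zeta_ext \<zeta> (us (k + K) y) - zeta_ext \<zeta> (u y)\<bar> \<le> \<zeta> (\<alpha> + \<beta> * norm y)"
      using a elim zenn[of "us (k + K) y"] zenn[of "u y"] by linarith
    then have "s k y \<le> w y" unfolding s_def w_def using p0 by (intro powr_mono2) auto
    then show ?case unfolding s_def by simp
  qed
  have zm0: "(\<lambda>y::'a. 0::real) \<in> borel_measurable lborel" by simp
  have sint: "integrable lborel (s k)" for k
    by (rule integrable_dominated_convergence2[OF zm0 sm wint slim sbound])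
  have ilim: "(\<lambda>k. integral\<^sup>L lborel (s k)) \<longlonglongrightarrow> integral\<^sup>L lborel (\<lambda>y. 0::real)"
    using integral_dominated_convergence[OF zm0 sm wint slim sbound] by simp
  then have ilim0: "(\<lambda>k. integral\<^sup>L lborel (s k)) \<longlonglongrightarrow> 0" by simp
  have inn: "0 \<le> integral\<^sup>L lborel (s k)" for k unfolding s_def by (rule integral_nonneg_AE) simp
  have deq: "delta_zeta_p \<zeta> p (us (k + K)) u = ennreal (integral\<^sup>L lborel (s k) powr (1 / p))" for k
  proof -
    have "(\<integral>\<^sup>+ x. ennreal (\<bar>zeta_ext \<zeta> (us (k + K) x) - zeta_ext \<zeta> (u x)\<bar> powr p) \<partial>lborel) = ennreal (integral\<^sup>L lborel (s k))"
      unfolding s_def[symmetric] by (rule nn_integral_eq_integral[OF sint]) (simp add: s_def)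
    then show ?thesis unfolding delta_zeta_p_def Let_def using inn[of k] by simp
  qed
  have "(\<lambda>k. ennreal (integral\<^sup>L lborel (s k) powr (1 / p))) \<longlonglongrightarrow> ennreal 0"
    by (intro tendsto_ennrealI tendsto_zero_powrI[OF ilim0 tendsto_const[of "1 / p"]]) (use p0 inn in auto)
  then have "(\<lambda>k. delta_zeta_p \<zeta> p (us (k + K)) u) \<longlonglongrightarrow> 0" unfolding deq by simp
  then show ?thesis by (rule LIMSEQ_offset)
qed

end
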